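(* Let $G$ be a prefix-independent game played on a finite graph, let $v_0\in V$, let $\epsilon\ge0$, and let $\lambda^*$ be the least $\epsilon$-fixed point of the negotiation function of $G$. Let $\theta$ be a play starting in $v_0$. If there exists an $\epsilon$-SPE $\bar\sigma$ in $G_{\|v_0}$ with $\langle\bar\sigma\rangle=\theta$, then $\theta$ is $\lambda^*$-consistent. If moreover $G$ has steady negotiation, then conversely, if $\theta$ is $\lambda^*$-consistent, there exists an $\epsilon$-SPE $\bar\sigma$ in $G_{\|v_0}$ with $\langle\bar\sigma\rangle=\theta$.
   Context: A game is a tuple $G=(\Pi,V,(V_i)_{i\in\Pi},E,\mu)$ where $\Pi$ is a finite set of players, $(V,E)$ is a directed graph in which every vertex has at least one outgoing edge, $(V_i)_{i\in\Pi}$ is a partition of $V$ ($V_i$ = vertices controlled by player $i$), and $\mu=(\mu_i)_{i\in\Pi}:V^\omega\to\mathbb{R}^\Pi$ is the payoff function. Plays are infinite paths, histories finite nonempty paths; $\rho_{\ge n}=\rho_n\rho_{n+1}\cdots$. A strategy for player $i$ from $v_0$ maps each history $hv$ starting at $v_0$ with $v\in V_i$ to a successor of $v$; $-i=\Pi\setminus\{i\}$; a complete profile $\bar\sigma$ from $v_0$ has a unique compatible play, its outcome $\langle\bar\sigma\rangle$; for a history $hv$, $\bar\sigma_{\|hv}$ is the profile from $v$ given by $\sigma_{j\|hv}(h')=\sigma_j(hh')$. $G$ is prefix-independent if $\mu(h\rho)=\mu(\rho)$ for every history $h$ and play $\rho$ with $h\rho$ a play. For $\epsilon\ge0$, a profile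 $\bar\sigma$ from $v_0$ is an $\epsilon$-SPE if for every history $hv$ from $v_0$, every player $i$ and every strategy $\sigma'_i$ from $v$, $\mu_i(\langle\bar\sigma_{-i\|hv},\sigma'_i\rangle)\le\mu_i(\langle\bar\sigma_{\|hv}\rangle)+\epsilon$ (a $0$-SPE is a subgame-perfect equilibrium). A requirement is a map $\lambda:V\to\overline{\mathbb{R}}=\mathbb{R}\cup\{\pm\infty\}$, ordered pointwise. A play $\rho$ is $\lambda$-consistent if for all $i$ and $n$ with $\rho_n\in V_i$, $\mu_i(\rho_{\ge n})\ge\lambda(\rho_n)$. For $v\in V_i$, a profile $\bar\sigma_{-i}$ from $v$ is $\lambda$-rational if there is a strategy $\sigma_i$ such that, with $\bar\sigma=(\bar\sigma_{-i},\sigma_i)$, for every history $hu$ from $v$ compatible with $\bar\sigma_{-i}$, the play $\langle\bar\sigma_{\|hu}\rangle$ is $\lambda$-consistent; $\lambda\mathsf{Rat}(v)$ is the set of such profiles. The negotiation function is $\mathsf{nego}(\lambda)(v)=\inf_{\bar\sigma_{-i}\in\lambda\mathsf{Rat}(v)}\sup_{\sigma_i}\mu_i(\langle\bar\sigma_{-i},\sigma_i\rangle)$ for $v\in V_i$, with $\inf\emptyset=+\infty$. $G$ has steady negotiation if for every requirement $\lambda$, every $i$ and every $v\in V_i$ with $\lambda\mathsf{Rat}(v)\ne\emptyset$, this infimum is attained. A requirement $\lambda$ is an $\epsilon$-fixed point of $\mathsf{nego}$ if for every $v$, $\lambda(v)-\epsilon\le\mathsf{nego}(\lambda)(v)\le\lambda(v)+\epsilon$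 (with $\pm\infty\pm\epsilon=\pm\infty$); a least one exists for every game. *)

theory Defs
  imports "HOL-Library.Extended_Real"
begin

text \<open>A game is given by: a set of players Pl, a vertex set V, an edge relation E,
  an owner map own (so that V_i = {v \<in> V. own v = i}), and a payoff mu, where
  mu i \<rho> is the payoff of player i on the play \<rho> :: nat \<Rightarrow> 'v.
  Histories are nonempty lists of vertices; strategies / profiles are functions
  on lists (values outside the relevant histories are irrelevant).\<close>

definition game :: "'p set \<Rightarrow> 'v set \<Rightarrow> ('v \<times> 'v) set \<Rightarrow> ('v \<Rightarrow> 'p) \<Rightarrow> bool" where
  "game Pl V E own \<longleftrightarrow> finite Pl \<and> E \<subseteq> V \<times> V \<and> (\<forall>v\<in>V. \<exists>u. (v, u) \<in> E) \<and> own ` V \<subseteq> Pl"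

definition is_play :: "'v set \<Rightarrow> ('v \<times> 'v) set \<Rightarrow> (nat \<Rightarrow> 'v) \<Rightarrow> bool" where
  "is_play V E \<rho> \<longleftrightarrow> (\<forall>n. \<rho> n \<in> V \<and> (\<rho> n, \<rho> (Suc n)) \<in> E)"

definition is_hist :: "'v set \<Rightarrow> ('v \<times> 'v) set \<Rightarrow> 'v \<Rightarrow> 'v list \<Rightarrow> bool" where
  "is_hist V E v h \<longleftrightarrow> h \<noteq> [] \<and> hd h = v \<and> set h \<subseteq> V \<and>
     (\<forall>k. Suc k < length h \<longrightarrow> (h ! k, h ! Suc k) \<in> E)"

definition prefix_independent :: "'p set \<Rightarrow> 'v set \<Rightarrow> ('v \<times> 'v) set \<Rightarrow> ('p \<Rightarrow> (nat \<Rightarrow> 'v) \<Rightarrow> real) \<Rightarrow> bool" where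
  "prefix_independent Pl V E mu \<longleftrightarrow>
     (\<forall>i\<in>Pl. \<forall>\<rho> n. is_play V E \<rho> \<longrightarrow> mu i (\<lambda>k. \<rho> (n + k)) = mu i \<rho>)"

definition is_strategy :: "'v set \<Rightarrow> ('v \<times> 'v) set \<Rightarrow> ('v \<Rightarrow> 'p) \<Rightarrow> 'p \<Rightarrow> 'v \<Rightarrow> ('v list \<Rightarrow> 'v) \<Rightarrow> bool" where
  "is_strategy V E own i v s \<longleftrightarrow>
     (\<forall>h. is_hist V E v h \<and> own (last h) = i \<longrightarrow> (last h, s h) \<in> E)"

definition is_profile :: "'p set \<Rightarrow> 'v set \<Rightarrow> ('v \<times> 'v) set \<Rightarrow> ('v \<Rightarrow> 'p) \<Rightarrow> 'v \<Rightarrow> ('p \<Rightarrow> 'v list \<Rightarrow> 'v) \<Rightarrow> bool" where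
  "is_profile Pl V E own v \<sigma> \<longleftrightarrow> (\<forall>j\<in>Pl. is_strategy V E own j v (\<sigma> j))"

fun out_hist :: "('v \<Rightarrow> 'p) \<Rightarrow> ('p \<Rightarrow> 'v list \<Rightarrow> 'v) \<Rightarrow> 'v \<Rightarrow> nat \<Rightarrow> 'v list" where
  "out_hist own \<sigma> v 0 = [v]"
| "out_hist own \<sigma> v (Suc n) =
     (let h = out_hist own \<sigma> v n in h @ [\<sigma> (own (last h)) h])"

definition outcome :: "('v \<Rightarrow> 'p) \<Rightarrow> ('p \<Rightarrow> 'v list \<Rightarrow> 'v) \<Rightarrow> 'v \<Rightarrow> nat \<Rightarrow> 'v" where
  "outcome own \<sigma> v n = last (out_hist own \<sigma> v n)"

text \<open>Subgame profile after history hv: sigma_j||hv (h') = sigma_j (h h').\<close>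
definition subprof :: "('p \<Rightarrow> 'v list \<Rightarrow> 'v) \<Rightarrow> 'v list \<Rightarrow> ('p \<Rightarrow> 'v list \<Rightarrow> 'v)" where
  "subprof \<sigma> hv = (\<lambda>j h'. \<sigma> j (butlast hv @ h'))"

definition eps_SPE :: "'p set \<Rightarrow> 'v set \<Rightarrow> ('v \<times> 'v) set \<Rightarrow> ('v \<Rightarrow> 'p) \<Rightarrow> ('p \<Rightarrow> (nat \<Rightarrow> 'v) \<Rightarrow> real)
      \<Rightarrow> real \<Rightarrow> 'v \<Rightarrow> ('p \<Rightarrow> 'v list \<Rightarrow> 'v) \<Rightarrow> bool" where
  "eps_SPE Pl V E own mu \<epsilon> v0 \<sigma> \<longleftrightarrow> is_profile Pl V E own v0 \<sigma> \<and>
     (\<forall>hv. is_hist V E v0 hv \<longrightarrow> (\<forall>i\<in>Pl. \<forall>\<tau>. is_strategy V E own i (last hv) \<tau> \<longrightarrow>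
        mu i (outcome own ((subprof \<sigma> hv)(i := \<tau>)) (last hv))
          \<le> mu i (outcome own (subprof \<sigma> hv) (last hv)) + \<epsilon>))"

text \<open>Requirements are maps V -> extended reals (values outside V irrelevant).\<close>
definition consistent :: "('v \<Rightarrow> 'p) \<Rightarrow> ('p \<Rightarrow> (nat \<Rightarrow> 'v) \<Rightarrow> real) \<Rightarrow> ('v \<Rightarrow> ereal) \<Rightarrow> (nat \<Rightarrow> 'v) \<Rightarrow> bool" where
  "consistent own mu lam \<rho> \<longleftrightarrow>
     (\<forall>n. lam (\<rho> n) \<le> ereal (mu (own (\<rho> n)) (\<lambda>k. \<rho> (n + k))))"

definition compatible :: "('v \<Rightarrow> 'p) \<Rightarrow> ('p \<Rightarrow> 'v list \<Rightarrow> 'v) \<Rightarrow> 'p \<Rightarrow> 'v list \<Rightarrow> bool" where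
  "compatible own \<sigma> i h \<longleftrightarrow>
     (\<forall>k. Suc k < length h \<longrightarrow> own (h ! k) \<noteq> i \<longrightarrow> h ! Suc k = \<sigma> (own (h ! k)) (take (Suc k) h))"

text \<open>lambda-Rat(v): profiles sigma_{-i} (given as full profiles whose i-component is ignored),
  i = own v, that are lambda-rational.\<close>
definition lamRat :: "'p set \<Rightarrow> 'v set \<Rightarrow> ('v \<times> 'v) set \<Rightarrow> ('v \<Rightarrow> 'p) \<Rightarrow> ('p \<Rightarrow> (nat \<Rightarrow> 'v) \<Rightarrow> real)
      \<Rightarrow> ('v \<Rightarrow> ereal) \<Rightarrow> 'v \<Rightarrow> ('p \<Rightarrow> 'v list \<Rightarrow> 'v) set" where
  "lamRat Pl V E own mu lam v = {\<sigma>.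
     (\<forall>j\<in>Pl - {own v}. is_strategy V E own j v (\<sigma> j)) \<and>
     (\<exists>\<tau>. is_strategy V E own (own v) v \<tau> \<and>
        (\<forall>hu. is_hist V E v hu \<and> compatible own \<sigma> (own v) hu \<longrightarrow>
           consistent own mu lam (outcome own (subprof (\<sigma>(own v := \<tau>)) hu) (last hu))))}"

definition nego_val :: "'p set \<Rightarrow> 'v set \<Rightarrow> ('v \<times> 'v) set \<Rightarrow> ('v \<Rightarrow> 'p) \<Rightarrow> ('p \<Rightarrow> (nat \<Rightarrow> 'v) \<Rightarrow> real)
      \<Rightarrow> 'v \<Rightarrow> ('p \<Rightarrow> 'v list \<Rightarrow> 'v) \<Rightarrow> ereal" where
  "nego_val Pl V E own mu v \<sigma> =
     (SUP \<tau> \<in> {\<tau>. is_strategy V E own (own v) v \<tau>}. ereal (mu (own v) (outcome own (\<sigma>(own v := \<tau>)) v)))"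

definition nego :: "'p set \<Rightarrow> 'v set \<Rightarrow> ('v \<times> 'v) set \<Rightarrow> ('v \<Rightarrow> 'p) \<Rightarrow> ('p \<Rightarrow> (nat \<Rightarrow> 'v) \<Rightarrow> real)
      \<Rightarrow> ('v \<Rightarrow> ereal) \<Rightarrow> 'v \<Rightarrow> ereal" where
  "nego Pl V E own mu lam v =
     (INF \<sigma> \<in> lamRat Pl V E own mu lam v. nego_val Pl V E own mu v \<sigma>)"

definition steady_negotiation :: "'p set \<Rightarrow> 'v set \<Rightarrow> ('v \<times> 'v) set \<Rightarrow> ('v \<Rightarrow> 'p) \<Rightarrow> ('p \<Rightarrow> (nat \<Rightarrow> 'v) \<Rightarrow> real) \<Rightarrow> bool" where
  "steady_negotiation Pl V E own mu \<longleftrightarrow>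
     (\<forall>lam. \<forall>v\<in>V. lamRat Pl V E own mu lam v \<noteq> {} \<longrightarrow>
        (\<exists>\<sigma>\<in>lamRat Pl V E own mu lam v. nego_val Pl V E own mu v \<sigma> = nego Pl V E own mu lam v))"

definition eps_fixed_point :: "'p set \<Rightarrow> 'v set \<Rightarrow> ('v \<times> 'v) set \<Rightarrow> ('v \<Rightarrow> 'p) \<Rightarrow> ('p \<Rightarrow> (nat \<Rightarrow> 'v) \<Rightarrow> real)
      \<Rightarrow> real \<Rightarrow> ('v \<Rightarrow> ereal) \<Rightarrow> bool" where
  "eps_fixed_point Pl V E own mu \<epsilon> lam \<longleftrightarrow>
     (\<forall>v\<in>V. lam v - ereal \<epsilon> \<le> nego Pl V E own mu lam v \<and> nego Pl V E own mu lam v \<le> lam v + ereal \<epsilon>)"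

definition least_eps_fixed_point :: "'p set \<Rightarrow> 'v set \<Rightarrow> ('v \<times> 'v) set \<Rightarrow> ('v \<Rightarrow> 'p) \<Rightarrow> ('p \<Rightarrow> (nat \<Rightarrow> 'v) \<Rightarrow> real)
      \<Rightarrow> real \<Rightarrow> ('v \<Rightarrow> ereal) \<Rightarrow> bool" where
  "least_eps_fixed_point Pl V E own mu \<epsilon> lam \<longleftrightarrow> eps_fixed_point Pl V E own mu \<epsilon> lam \<and>
     (\<forall>lam'. eps_fixed_point Pl V E own mu \<epsilon> lam' \<longrightarrow> (\<forall>v\<in>V. lam v \<le> lam' v))"

end

theory Submission
  imports Defs
begin


definition pre :: "(nat \<Rightarrow> 'v) \<Rightarrow> nat \<Rightarrow> 'v list" where
  "pre \<rho> m = map \<rho> [0..<Suc m]"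

function gext :: "('v list \<Rightarrow> 'v) \<Rightarrow> 'v list \<Rightarrow> nat \<Rightarrow> 'v" where
  "gext F g m = (if m < length g then g ! m else F (map (gext F g) [0..<m]))"
  by auto
termination by (relation "measure (\<lambda>(F,g,m). m)") auto

declare gext.simps[simp del]

lemma pre_length[simp]: "length (pre \<rho> m) = Suc m"
  by (simp add: pre_def)
lemma pre_nth[simp]: "j \<le> m \<Longrightarrow> pre \<rho> m ! j = \<rho> j"
  by (simp add: pre_def nth_append del: upt_Suc)
lemma pre_last[simp]: "last (pre \<rho> m) = \<rho> m"
  by (simp add: pre_def)
lemma pre_ne[simp]: "pre \<rho> m \<noteq> []"
  by (simp add: pre_def)
lemma pre_hd[simp]: "hd (pre \<rho> m) = \<rho> 0"
  by (simp add: pre_def hd_map del: upt_Suc)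
lemma pre_Suc: "pre \<rho> (Suc m) = pre \<rho> m @ [\<rho> (Suc m)]"
  by (simp add: pre_def)
lemma pre_take: "j \<le> m \<Longrightarrow> take (Suc j) (pre \<rho> m) = pre \<rho> j"
  by (simp add: pre_def take_map min_def del: upt_Suc)
lemma pre_take': "j \<le> m \<Longrightarrow> take j (pre \<rho> m) = map \<rho> [0..<j]"
  by (simp add: pre_def take_map min_def del: upt_Suc)
lemma pre_drop: "drop k (pre E (k+n)) = pre (\<lambda>j. E (k+j)) n"
  by (simp add: list_eq_iff_nth_eq pre_def del: upt_Suc)
lemma pre_cong: "(\<And>j. j \<le> m \<Longrightarrow> \<rho> j = \<rho>' j) \<Longrightarrow> pre \<rho> m = pre \<rho>' m"
  by (simp add: pre_def del: upt_Suc)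

lemma gext_less: "m < length g \<Longrightarrow> gext F g m = g ! m"
  by (simp add: gext.simps)
lemma gext_ge: "length g \<le> Suc m \<Longrightarrow> gext F g (Suc m) = F (pre (gext F g) m)"
  by (subst gext.simps) (simp add: pre_def del: upt_Suc)

lemma gext_char:
  assumes "g \<noteq> []" and "\<forall>m<length g. \<rho> m = g ! m" and "\<forall>m. length g \<le> Suc m \<longrightarrow> \<rho> (Suc m) = F (pre \<rho> m)"
  shows "\<rho> = gext F g"
proof
  fix m show "\<rho> m = gext F g m"
  proof (induction m rule: less_induct)
    case (less m)
    show ?case
    proof (cases "m < length g")
      case True thus ?thesis using assms(2) by (simp add: gext_less)
    next
      case False
      then obtain m' where m: "m = Suc m'" using assms(1) by (cases m) auto
      have "pre \<rho> m' = pre (gext F g) m'" by (rule pre_cong) (use less m in auto)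
      thus ?thesis using assms(3) False m gext_ge[of g m' F] by simp
    qed
  qed
qed

lemma gext_pre:
  assumes "g \<noteq> []" "length g \<le> Suc m"
  shows "gext F (pre (gext F g) m) = gext F g"
  apply (rule sym, rule gext_char)
  using assms by (auto simp: gext_less gext_ge)

lemma gext_cong:
  assumes "g \<noteq> []" "\<forall>m. length g \<le> Suc m \<longrightarrow> F (pre (gext F g) m) = F' (pre (gext F g) m)"
  shows "gext F' g = gext F g"
  apply (rule sym, rule gext_char)
  using assms by (auto simp: gext_less gext_ge)

lemma out_hist_eq: "out_hist own \<sigma> v n = pre (gext (\<lambda>h. \<sigma> (own (last h)) h) [v]) n"
proof (induction n)
  case 0 thus ?case by (simp add: pre_def gext_less)
next
  case (Suc n) thus ?case by (simp add: pre_Suc gext_ge Let_def)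
qed

lemma outcome_eq: "outcome own \<sigma> v = gext (\<lambda>h. \<sigma> (own (last h)) h) [v]"
  by (rule ext) (simp add: outcome_def out_hist_eq)

lemma outcome_shift:
  assumes "hv \<noteq> []"
  shows "outcome own \<rho> (last hv) = (\<lambda>n. gext (\<lambda>h. \<rho> (own (last h)) (drop (length hv - 1) h)) hv (length hv - 1 + n))"
    (is "_ = ?r")
proof -
  let ?k = "length hv - 1"
  let ?E = "gext (\<lambda>h. \<rho> (own (last h)) (drop ?k h)) hv"
  have "?r = gext (\<lambda>h. \<rho> (own (last h)) h) [last hv]"
  proof (rule gext_char)
    show "[last hv] \<noteq> []" by simp
    show "\<forall>m<length [last hv]. ?r m = [last hv] ! m"
      using assms by (simp add: gext_less last_conv_nth)
    show "\<forall>m. length [last hv] \<le> Suc m \<longrightarrow> ?r (Suc m) = \<rho> (own (last (pre ?r m))) (pre ?r m)"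
    proof (intro allI impI)
      fix m
      have "?r (Suc m) = ?E (Suc (?k + m))" by simp
      also have "\<dots> = \<rho> (own (last (pre ?E (?k+m)))) (drop ?k (pre ?E (?k+m)))"
        using assms by (subst gext_ge) auto
      also have "drop ?k (pre ?E (?k+m)) = pre ?r m" by (rule pre_drop)
      finally show "?r (Suc m) = \<rho> (own (last (pre ?r m))) (pre ?r m)" by simp
    qed
  qed
  thus ?thesis by (simp add: outcome_eq)
qed

lemma take_pre_gext:
  assumes "hv \<noteq> []" "length hv \<le> Suc m"
  shows "take (length hv - 1) (pre (gext F hv) m) = butlast hv"
proof -
  have "take (length hv - 1) (pre (gext F hv) m) = map (gext F hv) [0..<length hv - 1]"
    using assms by (simp add: pre_take')
  also have "\<dots> = map (\<lambda>j. hv ! j) [0..<length hv - 1]"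
    by (rule map_cong) (auto simp: gext_less)
  also have "\<dots> = butlast hv" by (simp add: list_eq_iff_nth_eq nth_butlast)
  finally show ?thesis .
qed

lemma butlast_drop_pre:
  assumes "hv \<noteq> []" "length hv \<le> Suc m"
  shows "butlast hv @ drop (length hv - 1) (pre (gext F hv) m) = pre (gext F hv) m"
  using take_pre_gext[OF assms, of F] by (metis append_take_drop_id)

lemma outcome_subprof:
  assumes "hv \<noteq> []"
  shows "outcome own (subprof \<sigma> hv) (last hv) = (\<lambda>n. gext (\<lambda>h. \<sigma> (own (last h)) h) hv (length hv - 1 + n))"
proof -
  let ?F = "\<lambda>h. \<sigma> (own (last h)) h"
  have "gext (\<lambda>h. subprof \<sigma> hv (own (last h)) (drop (length hv - 1) h)) hv = gext ?F hv"
    by (rule gext_cong) (use assms butlast_drop_pre[OF assms] in \<open>auto simp: subprof_def\<close>)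
  thus ?thesis using outcome_shift[OF assms, of own "subprof \<sigma> hv"] by simp
qed

lemma outcome_subprof_upd:
  assumes "hv \<noteq> []"
  shows "outcome own ((subprof \<sigma> hv)(i := \<tau>)) (last hv) = (\<lambda>n. gext (\<lambda>h. if own (last h) = i then \<tau> (drop (length hv - 1) h) else \<sigma> (own (last h)) h) hv (length hv - 1 + n))"
proof -
  let ?F = "\<lambda>h. if own (last h) = i then \<tau> (drop (length hv - 1) h) else \<sigma> (own (last h)) h"
  have "gext (\<lambda>h. ((subprof \<sigma> hv)(i := \<tau>)) (own (last h)) (drop (length hv - 1) h)) hv = gext ?F hv"
    by (rule gext_cong) (use assms butlast_drop_pre[OF assms] in \<open>auto simp: subprof_def\<close>)
  thus ?thesis using outcome_shift[OF assms, of own "(subprof \<sigma> hv)(i := \<tau>)"] by simp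
qed

lemma is_hist_take:
  assumes "is_hist V E v h" "0 < j"
  shows "is_hist V E v (take j h)"
  using assms unfolding is_hist_def
  by (auto simp: hd_take dest: in_set_takeD)

lemma is_hist_drop:
  assumes "is_hist V E v h" "k < length h"
  shows "is_hist V E (h ! k) (drop k h)"
  using assms unfolding is_hist_def
  by (auto simp: hd_drop_conv_nth dest: in_set_dropD)

lemma is_hist_app:
  assumes "is_hist V E v0 hv" "is_hist V E (last hv) h'"
  shows "is_hist V E v0 (butlast hv @ h')"
proof -
  have hv: "hv \<noteq> []" "hd hv = v0" "set hv \<subseteq> V" "\<forall>k. Suc k < length hv \<longrightarrow> (hv ! k, hv ! Suc k) \<in> E"
    using assms(1) by (auto simp: is_hist_def)
  have h': "h' \<noteq> []" "hd h' = last hv" "set h' \<subseteq> V" "\<forall>k. Suc k < length h' \<longrightarrow> (h' ! k, h' ! Suc k) \<in> E"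
    using assms(2) by (auto simp: is_hist_def)
  have eq: "butlast hv @ h' = hv @ tl h'"
    using hv(1) h'(1,2) by (metis append_butlast_last_id append_Cons append_assoc list.collapse self_append_conv2)
  have "\<forall>k. Suc k < length (hv @ tl h') \<longrightarrow> ((hv @ tl h') ! k, (hv @ tl h') ! Suc k) \<in> E"
  proof (intro allI impI)
    fix k assume k: "Suc k < length (hv @ tl h')"
    show "((hv @ tl h') ! k, (hv @ tl h') ! Suc k) \<in> E"
    proof (cases "Suc k < length hv")
      case True thus ?thesis using hv(4) by (simp add: nth_append)
    next
      case False
      let ?j = "k + 1 - length hv"
      have "(hv @ tl h') ! k = h' ! ?j"
      proof (cases "k < length hv")
        case True
        hence "k = length hv - 1" using False by simp
        thus ?thesis using True h'(1,2) hv(1) by (simp add: nth_append last_conv_nth hd_conv_nth)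
      next
        case F: False
        hence "?j = Suc (k - length hv)" by simp
        thus ?thesis using F h'(1) by (cases h') (auto simp: nth_append)
      qed
      moreover have "(hv @ tl h') ! Suc k = h' ! Suc ?j"
        using False h'(1) by (cases h') (auto simp: nth_append)
      moreover have "Suc ?j < length h'" using k False h'(1) by auto
      ultimately show ?thesis using h'(4) by simp
    qed
  qed
  moreover have "set (hv @ tl h') \<subseteq> V" using hv(3) h'(3) h'(1) by (auto dest: list.set_sel(2))
  ultimately show ?thesis using hv(1,2) eq unfolding is_hist_def by auto
qed

lemma last_butlast_app[simp]: "h' \<noteq> [] \<Longrightarrow> last (butlast hv @ h') = last h'"
  by simp

lemma play_pre_hist: "is_play V E \<rho> \<Longrightarrow> is_hist V E (\<rho> 0) (pre \<rho> m)"
  using pre_hd[of \<rho> m] unfolding is_hist_def is_play_def by (auto simp: pre_def simp del: upt_Suc)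

lemma pre_gext_small: "m < length g \<Longrightarrow> pre (gext F g) m = take (Suc m) g"
  by (simp add: list_eq_iff_nth_eq gext_less)

lemma gext_hist:
  assumes g: "is_hist V E v g" and EV: "E \<subseteq> V \<times> V"
    and valid: "\<forall>h. is_hist V E v h \<and> length g \<le> length h \<and> take (length g) h = g \<longrightarrow> (last h, F h) \<in> E"
  shows "is_hist V E v (pre (gext F g) m)" "is_play V E (gext F g)"
proof -
  have gne: "g \<noteq> []" using g by (simp add: is_hist_def)
  have A: "is_hist V E v (pre (gext F g) m)" for m
  proof (induction m)
    case 0 thus ?case using is_hist_take[OF g, of 1] gne by (simp add: pre_gext_small)
  next
    case (Suc m)
    show ?case
    proof (cases "Suc m < length g")
      case True thus ?thesis using is_hist_take[OF g, of "Suc (Suc m)"] by (simp add: pre_gext_small)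
    next
      case False
      let ?h = "pre (gext F g) m"
      have tk: "take (length g) ?h = g" using False
        by (simp add: list_eq_iff_nth_eq gext_less min_def)
      have e: "(last ?h, F ?h) \<in> E" using valid Suc.IH tk False by auto
      have "gext F g (Suc m) = F ?h" using False by (simp add: gext_ge)
      hence "pre (gext F g) (Suc m) = ?h @ [F ?h]" by (simp add: pre_Suc)
      thus ?thesis using Suc.IH e EV unfolding is_hist_def
        by (auto simp: nth_append last_conv_nth less_Suc_eq)
    qed
  qed
  show "is_hist V E v (pre (gext F g) m)" by (rule A)
  show "is_play V E (gext F g)" unfolding is_play_def
  proof
    fix n
    have h: "is_hist V E v (pre (gext F g) (Suc n))" by (rule A)
    thus "gext F g n \<in> V \<and> (gext F g n, gext F g (Suc n)) \<in> E"
      unfolding is_hist_def by (auto simp: pre_def simp del: upt_Suc)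
  qed
qed



lemma prof_outcome_hist:
  assumes G: "game Pl V E own" and P: "is_profile Pl V E own v \<rho>" and v: "v \<in> V"
  shows "is_hist V E v (out_hist own \<rho> v n)" "is_play V E (outcome own \<rho> v)"
proof -
  have g: "is_hist V E v [v]" using v by (simp add: is_hist_def)
  have EV: "E \<subseteq> V \<times> V" using G by (simp add: game_def)
  have val: "\<forall>h. is_hist V E v h \<and> length [v] \<le> length h \<and> take (length [v]) h = [v] \<longrightarrow>
      (last h, (\<lambda>h. \<rho> (own (last h)) h) h) \<in> E"
  proof (intro allI impI)
    fix h assume h: "is_hist V E v h \<and> length [v] \<le> length h \<and> take (length [v]) h = [v]"
    hence "last h \<in> V" by (auto simp: is_hist_def)
    hence "own (last h) \<in> Pl" using G by (auto simp: game_def)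
    thus "(last h, (\<lambda>h. \<rho> (own (last h)) h) h) \<in> E"
      using P h by (auto simp: is_profile_def is_strategy_def)
  qed
  show "is_hist V E v (out_hist own \<rho> v n)"
    using gext_hist(1)[OF g EV val] by (simp add: out_hist_eq)
  show "is_play V E (outcome own \<rho> v)"
    using gext_hist(2)[OF g EV val] by (simp add: outcome_eq)
qed

lemma subprof_subprof: "h' \<noteq> [] \<Longrightarrow> subprof (subprof \<sigma> hv) h' = subprof \<sigma> (butlast hv @ h')"
  by (simp add: subprof_def butlast_append)

lemma spe_subprof:
  assumes S: "eps_SPE Pl V E own mu \<epsilon> u \<rho>" and hv: "is_hist V E u hv"
  shows "eps_SPE Pl V E own mu \<epsilon> (last hv) (subprof \<rho> hv)"
  unfolding eps_SPE_def
proof (intro conjI allI impI ballI)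
  show "is_profile Pl V E own (last hv) (subprof \<rho> hv)"
    unfolding is_profile_def is_strategy_def
  proof (intro ballI allI impI)
    fix j h' assume j: "j \<in> Pl" and h': "is_hist V E (last hv) h' \<and> own (last h') = j"
    have "is_hist V E u (butlast hv @ h')" using is_hist_app[OF hv] h' by blast
    moreover have "h' \<noteq> []" using h' by (simp add: is_hist_def)
    ultimately show "(last h', subprof \<rho> hv j h') \<in> E"
      using S j h' unfolding eps_SPE_def is_profile_def is_strategy_def subprof_def
      by (metis last_butlast_app)
  qed
next
  fix hv' i \<tau> assume hv': "is_hist V E (last hv) hv'" and i: "i \<in> Pl"
    and t: "is_strategy V E own i (last hv') \<tau>"
  have ne: "hv' \<noteq> []" using hv' by (simp add: is_hist_def)
  have H: "is_hist V E u (butlast hv @ hv')" by (rule is_hist_app[OF hv hv'])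
  have L: "last (butlast hv @ hv') = last hv'" using ne by simp
  show "mu i (outcome own ((subprof (subprof \<rho> hv) hv')(i := \<tau>)) (last hv'))
        \<le> mu i (outcome own (subprof (subprof \<rho> hv) hv') (last hv')) + \<epsilon>"
    using S H i t L unfolding eps_SPE_def subprof_subprof[OF ne] by metis
qed

lemma outcome_shift_pre:
  "outcome own (subprof \<rho> (out_hist own \<rho> w n)) (outcome own \<rho> w n) = (\<lambda>j. outcome own \<rho> w (n + j))"
proof -
  let ?F = "\<lambda>h. \<rho> (own (last h)) h"
  let ?E = "gext ?F [w]"
  have "outcome own (subprof \<rho> (pre ?E n)) (last (pre ?E n)) = (\<lambda>j. gext ?F (pre ?E n) (length (pre ?E n) - 1 + j))"
    by (rule outcome_subprof) simp
  also have "gext ?F (pre ?E n) = ?E" by (rule gext_pre) auto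
  finally show ?thesis by (simp add: out_hist_eq outcome_eq)
qed

definition Pspe where
  "Pspe Pl V E own mu \<epsilon> u = (if u \<in> V then INF \<rho> \<in> {\<rho>. eps_SPE Pl V E own mu \<epsilon> u \<rho>}. ereal (mu (own u) (outcome own \<rho> u)) else \<infinity>)"

lemma cons_P:
  assumes G: "game Pl V E own" and S: "eps_SPE Pl V E own mu \<epsilon> w \<rho>" and w: "w \<in> V"
  shows "consistent own mu (Pspe Pl V E own mu \<epsilon>) (outcome own \<rho> w)"
  unfolding consistent_def
proof
  fix n
  let ?x = "outcome own \<rho> w"
  have prof: "is_profile Pl V E own w \<rho>" using S by (simp add: eps_SPE_def)
  have H: "is_hist V E w (out_hist own \<rho> w n)" by (rule prof_outcome_hist(1)[OF G prof w])
  have L: "last (out_hist own \<rho> w n) = ?x n" by (simp add: outcome_def)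
  have xV: "?x n \<in> V" using H L last_in_set[of "out_hist own \<rho> w n"] by (auto simp: is_hist_def)
  have S': "eps_SPE Pl V E own mu \<epsilon> (?x n) (subprof \<rho> (out_hist own \<rho> w n))"
    using spe_subprof[OF S H] L by simp
  have "Pspe Pl V E own mu \<epsilon> (?x n) \<le> ereal (mu (own (?x n)) (outcome own (subprof \<rho> (out_hist own \<rho> w n)) (?x n)))"
    unfolding Pspe_def using xV S' by (auto intro: INF_lower)
  thus "Pspe Pl V E own mu \<epsilon> (?x n) \<le> ereal (mu (own (?x n)) (\<lambda>k. ?x (n + k)))"
    by (simp add: outcome_shift_pre)
qed

lemma mono_nego: "mono (\<lambda>lam u. nego Pl V E own mu lam u - ereal \<epsilon>)"
proof (rule monoI, rule le_funI)
  fix l1 l2 :: "'a \<Rightarrow> ereal" and u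
  assume le: "l1 \<le> l2"
  have "lamRat Pl V E own mu l2 u \<subseteq> lamRat Pl V E own mu l1 u"
  proof -
    have c: "consistent own mu l2 \<rho> \<Longrightarrow> consistent own mu l1 \<rho>" for \<rho>
      using le unfolding consistent_def le_fun_def by (meson order_trans)
    show ?thesis unfolding lamRat_def using c by blast
  qed
  hence "nego Pl V E own mu l1 u \<le> nego Pl V E own mu l2 u"
    unfolding nego_def by (rule INF_superset_mono) simp
  thus "nego Pl V E own mu l1 u - ereal \<epsilon> \<le> nego Pl V E own mu l2 u - ereal \<epsilon>"
    by (simp add: ereal_minus_mono)
qed

lemma subprof_single[simp]: "subprof \<sigma> [u] = \<sigma>"
  by (simp add: subprof_def)

lemma F_le_P:
  assumes G: "game Pl V E own"
  shows "(\<lambda>u. nego Pl V E own mu (Pspe Pl V E own mu \<epsilon>) u - ereal \<epsilon>) \<le> Pspe Pl V E own mu \<epsilon>"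
proof (rule le_funI)
  fix u
  let ?P = "Pspe Pl V E own mu \<epsilon>"
  show "nego Pl V E own mu ?P u - ereal \<epsilon> \<le> ?P u"
  proof (cases "u \<in> V")
    case False thus ?thesis by (simp add: Pspe_def)
  next
    case uV: True
    have ownu: "own u \<in> Pl" using G uV by (auto simp: game_def)
    have hu: "is_hist V E u [u]" using uV by (simp add: is_hist_def)
    have "nego Pl V E own mu ?P u - ereal \<epsilon> \<le> ereal (mu (own u) (outcome own \<rho> u))"
      if S: "eps_SPE Pl V E own mu \<epsilon> u \<rho>" for \<rho>
    proof -
      have prof: "is_profile Pl V E own u \<rho>" using S by (simp add: eps_SPE_def)
      have "\<rho> \<in> lamRat Pl V E own mu ?P u"
        unfolding lamRat_def
      proof (intro CollectI conjI ballI exI[of _ "\<rho> (own u)"] allI impI)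
        fix j assume "j \<in> Pl - {own u}"
        thus "is_strategy V E own j u (\<rho> j)" using prof by (simp add: is_profile_def)
      next
        show "is_strategy V E own (own u) u (\<rho> (own u))" using prof ownu by (simp add: is_profile_def)
      next
        fix hu assume hu: "is_hist V E u hu \<and> compatible own \<rho> (own u) hu"
        have "last hu \<in> V" using hu by (auto simp: is_hist_def)
        thus "consistent own mu ?P (outcome own (subprof (\<rho>(own u := \<rho> (own u))) hu) (last hu))"
          using cons_P[OF G spe_subprof[OF S] ] hu by simp
      qed
      hence "nego Pl V E own mu ?P u \<le> nego_val Pl V E own mu u \<rho>"
        unfolding nego_def by (rule INF_lower)
      also have "\<dots> \<le> ereal (mu (own u) (outcome own \<rho> u) + \<epsilon>)"
        unfolding nego_val_def
      proof (rule SUP_least)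
        fix \<tau> assume t: "\<tau> \<in> {\<tau>. is_strategy V E own (own u) u \<tau>}"
        have A: "\<forall>i\<in>Pl. \<forall>\<tau>. is_strategy V E own i (last [u]) \<tau> \<longrightarrow> mu i (outcome own ((subprof \<rho> [u])(i := \<tau>)) (last [u])) \<le> mu i (outcome own (subprof \<rho> [u]) (last [u])) + \<epsilon>"
          using S hu unfolding eps_SPE_def by blast
        have "\<forall>i\<in>Pl. \<forall>\<tau>. is_strategy V E own i u \<tau> \<longrightarrow> mu i (outcome own (\<rho>(i := \<tau>)) u) \<le> mu i (outcome own \<rho> u) + \<epsilon>"
          using A by simp
        hence "mu (own u) (outcome own (\<rho>(own u := \<tau>)) u) \<le> mu (own u) (outcome own \<rho> u) + \<epsilon>"
          using ownu t by blast
        thus "ereal (mu (own u) (outcome own (\<rho>(own u := \<tau>)) u)) \<le> ereal (mu (own u) (outcome own \<rho> u) + \<epsilon>)"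
          by simp
      qed
      finally show ?thesis by (cases "nego Pl V E own mu ?P u") auto
    qed
    thus ?thesis unfolding Pspe_def using uV by (auto intro: INF_greatest)
  qed
qed



lemma dir1:
  assumes G: "game Pl V E own" and e: "\<epsilon> \<ge> 0"
    and lst: "least_eps_fixed_point Pl V E own mu \<epsilon> lam"
    and S: "eps_SPE Pl V E own mu \<epsilon> v0 \<sigma>" and v0: "v0 \<in> V"
  shows "consistent own mu lam (outcome own \<sigma> v0)"
proof -
  let ?F = "\<lambda>lam u. nego Pl V E own mu lam u - ereal \<epsilon>"
  let ?P = "Pspe Pl V E own mu \<epsilon>"
  define L where "L = lfp ?F"
  have fp: "?F L = L" unfolding L_def by (rule lfp_fixpoint[OF mono_nego])
  have LP: "L \<le> ?P" unfolding L_def apply (rule lfp_lowerbound) using F_le_P[OF G, of mu \<epsilon>] by simp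
  have "eps_fixed_point Pl V E own mu \<epsilon> L"
    unfolding eps_fixed_point_def
  proof (intro ballI conjI)
    fix v
    have Lv: "L v = nego Pl V E own mu L v - ereal \<epsilon>" using fun_cong[OF fp, of v] by simp
    show "L v - ereal \<epsilon> \<le> nego Pl V E own mu L v"
      unfolding Lv using e by (cases "nego Pl V E own mu L v") auto
    show "nego Pl V E own mu L v \<le> L v + ereal \<epsilon>"
      unfolding Lv by (cases "nego Pl V E own mu L v") auto
  qed
  hence le: "\<forall>v\<in>V. lam v \<le> L v" using lst by (simp add: least_eps_fixed_point_def)
  have C: "consistent own mu ?P (outcome own \<sigma> v0)" by (rule cons_P[OF G S v0])
  have prof: "is_profile Pl V E own v0 \<sigma>" using S by (simp add: eps_SPE_def)
  show ?thesis unfolding consistent_def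
  proof
    fix n
    have "outcome own \<sigma> v0 n \<in> V"
      using prof_outcome_hist(2)[OF G prof v0] by (simp add: is_play_def)
    hence "lam (outcome own \<sigma> v0 n) \<le> L (outcome own \<sigma> v0 n)"
      using le by blast
    also have "\<dots> \<le> ?P (outcome own \<sigma> v0 n)" using LP by (rule le_funD)
    also have "\<dots> \<le> ereal (mu (own (outcome own \<sigma> v0 n)) (\<lambda>k. outcome own \<sigma> v0 (n + k)))"
      using C unfolding consistent_def by blast
    finally show "lam (outcome own \<sigma> v0 n) \<le> ereal (mu (own (outcome own \<sigma> v0 n)) (\<lambda>k. outcome own \<sigma> v0 (n + k)))" .
  qed
qed


lemma gext_drop:
  assumes "k < length h"
  shows "(\<lambda>j. gext (\<lambda>g. G (drop k g)) h (k + j)) = gext G (drop k h)"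
proof (rule gext_char)
  show "drop k h \<noteq> []" using assms by simp
  show "\<forall>m<length (drop k h). gext (\<lambda>g. G (drop k g)) h (k + m) = drop k h ! m"
    by (auto simp: gext_less)
  show "\<forall>m. length (drop k h) \<le> Suc m \<longrightarrow>
      gext (\<lambda>g. G (drop k g)) h (k + Suc m) = G (pre (\<lambda>j. gext (\<lambda>g. G (drop k g)) h (k + j)) m)"
  proof (intro allI impI)
    fix m assume "length (drop k h) \<le> Suc m"
    hence "length h \<le> Suc (k + m)" using assms by simp
    hence "gext (\<lambda>g. G (drop k g)) h (Suc (k + m)) = G (drop k (pre (gext (\<lambda>g. G (drop k g)) h) (k + m)))"
      by (simp add: gext_ge)
    thus "gext (\<lambda>g. G (drop k g)) h (k + Suc m) = G (pre (\<lambda>j. gext (\<lambda>g. G (drop k g)) h (k + j)) m)"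
      by (simp add: pre_drop)
  qed
qed

lemma compatible_snoc:
  assumes "compatible own \<sigma> i hu" "hu \<noteq> []" "own (last hu) \<noteq> i \<longrightarrow> x = \<sigma> (own (last hu)) hu"
  shows "compatible own \<sigma> i (hu @ [x])"
  unfolding compatible_def
proof (intro allI impI)
  fix k assume k: "Suc k < length (hu @ [x])" and o: "own ((hu @ [x]) ! k) \<noteq> i"
  show "(hu @ [x]) ! Suc k = \<sigma> (own ((hu @ [x]) ! k)) (take (Suc k) (hu @ [x]))"
  proof (cases "Suc k < length hu")
    case True thus ?thesis using assms(1) o by (simp add: compatible_def nth_append)
  next
    case False
    hence kk: "k = length hu - 1" using k by simp
    hence "(hu @ [x]) ! k = last hu" using assms(2) by (simp add: nth_append last_conv_nth)
    moreover have "take (Suc k) (hu @ [x]) = hu" using kk assms(2) by simp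
    moreover have "(hu @ [x]) ! Suc k = x" using kk assms(2) by (simp add: nth_append)
    ultimately show ?thesis using assms(3) o by simp
  qed
qed

lemma compatible_two: "compatible own \<sigma> (own a) [a, b]"
  unfolding compatible_def by (auto simp: less_Suc_eq)

lemma compatible_take:
  assumes "compatible own \<sigma> i hu" "j \<le> length hu"
  shows "compatible own \<sigma> i (take j hu)"
  using assms unfolding compatible_def by (auto simp: min_def)

lemma antitone_chain:
  fixes c :: "nat \<Rightarrow> 'a::linorder"
  assumes "\<forall>m\<ge>N. c (Suc m) \<le> c m" "N \<le> a" "a \<le> b"
  shows "c b \<le> c a"
  using assms(3)
proof (induction rule: dec_induct)
  case base thus ?case by simp
next
  case (step n)
  thus ?case using assms(1,2) by (meson order_trans le_trans)
qed

lemma antitone_finite_const: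
  fixes c :: "nat \<Rightarrow> 'a::linorder"
  assumes "\<forall>m\<ge>N. c (Suc m) \<le> c m" "finite (c ` {N..})"
  shows "\<exists>M\<ge>N. \<forall>m\<ge>M. c m = c M"
proof -
  have ne: "c ` {N..} \<noteq> {}" by auto
  obtain M where M: "M \<ge> N" "c M = Min (c ` {N..})"
    using Min_in[OF assms(2) ne] by auto
  have "\<forall>m\<ge>M. c m = c M"
  proof (intro allI impI)
    fix m assume m: "M \<le> m"
    have "c m \<le> c M" by (rule antitone_chain[OF assms(1) M(1) m])
    moreover have "c M \<le> c m" using M m assms(2) by simp
    ultimately show "c m = c M" by simp
  qed
  thus ?thesis using M(1) by blast
qed

locale D2 =
  fixes Pl :: "'p set" and V :: "'v set" and E :: "('v \<times> 'v) set" and own :: "'v \<Rightarrow> 'p"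
    and mu :: "'p \<Rightarrow> (nat \<Rightarrow> 'v) \<Rightarrow> real" and \<epsilon> :: real
    and lam :: "'v \<Rightarrow> ereal" and \<theta> :: "nat \<Rightarrow> 'v" and v0 :: 'v
  assumes G: "game Pl V E own" and fin: "finite V" and PI: "prefix_independent Pl V E mu"
    and e: "\<epsilon> \<ge> 0"
    and fpu: "\<forall>v\<in>V. nego Pl V E own mu lam v \<le> lam v + ereal \<epsilon>"
    and play: "is_play V E \<theta>" and th0: "\<theta> 0 = v0"
    and steady: "steady_negotiation Pl V E own mu" and cons: "consistent own mu lam \<theta>"
begin

definition Rat where "Rat w = lamRat Pl V E own mu lam w"
definition ng where "ng w = nego Pl V E own mu lam w"
definition S where "S w = (SOME \<sigma>. \<sigma> \<in> Rat w \<and> nego_val Pl V E own mu w \<sigma> = ng w)"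
definition ratT where "ratT w \<tau> \<longleftrightarrow> is_strategy V E own (own w) w \<tau> \<and>
  (\<forall>hu. is_hist V E w hu \<and> compatible own (S w) (own w) hu \<longrightarrow>
     consistent own mu lam (outcome own (subprof ((S w)(own w := \<tau>)) hu) (last hu)))"
definition T where "T w = (SOME \<tau>. ratT w \<tau>)"
definition pii where "pii w = (S w)(own w := T w)"

definition mv :: "nat option \<Rightarrow> 'v list \<Rightarrow> 'v" where
  "mv s h = (case s of None \<Rightarrow> \<theta> (length h) | Some k \<Rightarrow> pii (h ! k) (own (last h)) (drop k h))"

definition step :: "nat option \<Rightarrow> 'v list \<Rightarrow> 'v \<Rightarrow> nat option" where
  "step s h x = (if x = mv s h then s else
     (case s of None \<Rightarrow> Some (length h - 1)
      | Some k \<Rightarrow> if own (h ! k) = own (last h) \<and> ng (h ! k) \<le> ng (last h) then Some k else Some (length h - 1)))"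

primrec stp :: "'v list \<Rightarrow> nat \<Rightarrow> nat option" where
  "stp h 0 = None"
| "stp h (Suc n) = step (stp h n) (take (Suc n) h) (h ! Suc n)"

definition st where "st h = stp h (length h - 1)"

definition F where "F h = mv (st h) h"

lemma S_props:
  assumes "w \<in> V" "Rat w \<noteq> {}"
  shows "S w \<in> Rat w" "nego_val Pl V E own mu w (S w) = ng w"
proof -
  have "\<exists>\<sigma>. \<sigma> \<in> Rat w \<and> nego_val Pl V E own mu w \<sigma> = ng w"
    using steady assms unfolding steady_negotiation_def Rat_def ng_def by blast
  hence "S w \<in> Rat w \<and> nego_val Pl V E own mu w (S w) = ng w"
    unfolding S_def by (rule someI_ex)
  thus "S w \<in> Rat w" "nego_val Pl V E own mu w (S w) = ng w" by auto
qed

lemma T_props: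
  assumes "w \<in> V" "Rat w \<noteq> {}"
  shows "ratT w (T w)"
proof -
  have "\<exists>\<tau>. ratT w \<tau>" using S_props(1)[OF assms] unfolding Rat_def lamRat_def ratT_def by blast
  thus ?thesis unfolding T_def by (rule someI_ex)
qed

lemma S_strat:
  assumes "w \<in> V" "Rat w \<noteq> {}" "j \<in> Pl" "j \<noteq> own w"
  shows "is_strategy V E own j w (S w j)"
  using S_props(1)[OF assms(1,2)] assms(3,4) unfolding Rat_def lamRat_def by blast

lemma stp_app: "n < length h \<Longrightarrow> stp (h @ ys) n = stp h n"
  by (induction n) (auto simp: nth_append)

lemma st_snoc: "h \<noteq> [] \<Longrightarrow> st (h @ [x]) = step (st h) h x"
proof -
  assume ne: "h \<noteq> []"
  then obtain n where n: "length h = Suc n" by (cases h) auto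
  have "st (h @ [x]) = stp (h @ [x]) (Suc n)" using n by (simp add: st_def)
  also have "\<dots> = step (stp h n) h x" using n stp_app[of n h "[x]"] by (simp add: nth_append)
  finally show ?thesis using n by (simp add: st_def)
qed

lemma st_single[simp]: "st [v] = None"
  by (simp add: st_def)

lemma st_theta: "st (pre \<theta> m) = None"
proof (induction m)
  case 0 thus ?case by (simp add: pre_def)
next
  case (Suc m)
  have "mv None (pre \<theta> m) = \<theta> (Suc m)" by (simp add: mv_def)
  thus ?case using Suc st_snoc[of "pre \<theta> m" "\<theta> (Suc m)"] by (simp add: pre_Suc step_def)
qed

lemma gext_theta:
  assumes "h \<noteq> []" "\<forall>m<length h. h ! m = \<theta> m"
  shows "gext F h = \<theta>"
proof (rule sym, rule gext_char)
  show "h \<noteq> []" by fact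
  show "\<forall>m<length h. \<theta> m = h ! m" using assms(2) by simp
  show "\<forall>m. length h \<le> Suc m \<longrightarrow> \<theta> (Suc m) = F (pre \<theta> m)"
    by (simp add: F_def st_theta mv_def)
qed

lemma st_gext_const:
  assumes "g \<noteq> []" "length g \<le> Suc m"
  shows "st (pre (gext F g) m) = st g"
  using assms(2)
proof (induction m)
  case 0
  hence "length g = 1" using assms(1) by (cases g) auto
  thus ?case using assms(1) by (simp add: pre_gext_small)
next
  case (Suc m)
  show ?case
  proof (cases "length g \<le> Suc m")
    case True
    have "gext F g (Suc m) = F (pre (gext F g) m)" using True by (simp add: gext_ge)
    hence "st (pre (gext F g) (Suc m)) = step (st (pre (gext F g) m)) (pre (gext F g) m) (F (pre (gext F g) m))"
      by (simp add: pre_Suc st_snoc)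
    also have "\<dots> = st (pre (gext F g) m)" by (simp add: step_def F_def)
    finally show ?thesis using Suc True by simp
  next
    case False
    hence "length g = Suc (Suc m)" using Suc by simp
    thus ?thesis by (simp add: pre_gext_small)
  qed
qed


definition INV where
  "INV h \<longleftrightarrow> (st h = None \<longrightarrow> (\<forall>m<length h. h ! m = \<theta> m)) \<and>
    (\<forall>k. st h = Some k \<longrightarrow> Suc k < length h \<and> h ! k \<in> V \<and> Rat (h ! k) \<noteq> {} \<and>
        compatible own (S (h ! k)) (own (h ! k)) (drop k h))"

lemma gext_F_Some:
  assumes "h \<noteq> []" "st h = Some k" "k < length h"
  shows "gext F h = gext (\<lambda>g. pii (h ! k) (own (last g)) (drop k g)) h"
proof (rule sym, rule gext_cong)
  show "h \<noteq> []" by fact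
  show "\<forall>m. length h \<le> Suc m \<longrightarrow> F (pre (gext F h) m) = pii (h ! k) (own (last (pre (gext F h) m))) (drop k (pre (gext F h) m))"
  proof (intro allI impI)
    fix m assume m: "length h \<le> Suc m"
    have "st (pre (gext F h) m) = Some k" using st_gext_const[OF assms(1) m] assms(2) by simp
    moreover have "pre (gext F h) m ! k = h ! k" using m assms(3) by (simp add: gext_less)
    ultimately show "F (pre (gext F h) m) = pii (h ! k) (own (last (pre (gext F h) m))) (drop k (pre (gext F h) m))"
      by (simp add: F_def mv_def)
  qed
qed

lemma plan:
  assumes H: "is_hist V E v0 h" and I: "INV h"
  shows "lam (last h) \<le> ereal (mu (own (last h)) (\<lambda>n. gext F h (length h - 1 + n)))"
proof -
  have ne: "h \<noteq> []" using H by (simp add: is_hist_def)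
  show ?thesis
  proof (cases "st h")
    case None
    hence th: "\<forall>m<length h. h ! m = \<theta> m" using I by (simp add: INV_def)
    have g: "gext F h = \<theta>" by (rule gext_theta[OF ne th])
    have "last h = \<theta> (length h - 1)" using th ne by (simp add: last_conv_nth)
    thus ?thesis using cons g unfolding consistent_def by simp
  next
    case (Some k)
    let ?w = "h ! k"
    let ?hu = "drop k h"
    have k: "Suc k < length h" "?w \<in> V" "Rat ?w \<noteq> {}" "compatible own (S ?w) (own ?w) ?hu"
      using I Some by (auto simp: INV_def)
    have hu: "is_hist V E ?w ?hu" using is_hist_drop[OF H] k(1) by simp
    have hune: "?hu \<noteq> []" using k(1) by simp
    have "ratT ?w (T ?w)" by (rule T_props[OF k(2,3)])
    hence C: "consistent own mu lam (outcome own (subprof (pii ?w) ?hu) (last ?hu))"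
      using hu k(4) unfolding ratT_def pii_def by blast
    let ?Fp = "\<lambda>g. pii ?w (own (last g)) g"
    have O: "outcome own (subprof (pii ?w) ?hu) (last ?hu) = (\<lambda>n. gext ?Fp ?hu (length ?hu - 1 + n))"
      by (rule outcome_subprof[OF hune])
    have g1: "gext F h = gext (\<lambda>g. ?Fp (drop k g)) h"
    proof -
      have "gext F h = gext (\<lambda>g. pii ?w (own (last g)) (drop k g)) h"
        by (rule gext_F_Some[OF ne Some]) (use k in simp)
      also have "(\<lambda>g. pii ?w (own (last g)) (drop k g)) = (\<lambda>g. if k < length g then ?Fp (drop k g) else pii ?w (own (last g)) (drop k g))"
        by (auto simp: fun_eq_iff)
      finally have A: "gext F h = gext (\<lambda>g. if k < length g then ?Fp (drop k g) else pii ?w (own (last g)) (drop k g)) h" .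
      have "gext (\<lambda>g. ?Fp (drop k g)) h = gext (\<lambda>g. if k < length g then ?Fp (drop k g) else pii ?w (own (last g)) (drop k g)) h"
        by (rule gext_cong) (use ne k(1) in auto)
      thus ?thesis using A by simp
    qed
    have g2: "(\<lambda>j. gext (\<lambda>g. ?Fp (drop k g)) h (k + j)) = gext ?Fp ?hu"
      by (rule gext_drop) (use k in simp)
    have eqn: "gext F h (length h - 1 + n) = gext ?Fp ?hu (length ?hu - 1 + n)" for n
    proof -
      have "length h - 1 + n = k + (length ?hu - 1 + n)" using k(1) by simp
      thus ?thesis using g1 fun_cong[OF g2, of "length ?hu - 1 + n"] by (simp add: add.assoc)
    qed
    have "lam (gext ?Fp ?hu (length ?hu - 1 + 0)) \<le> ereal (mu (own (gext ?Fp ?hu (length ?hu - 1 + 0))) (\<lambda>n. gext ?Fp ?hu (length ?hu - 1 + (0 + n))))"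
      using C unfolding O consistent_def by blast
    moreover have "gext ?Fp ?hu (length ?hu - 1) = last h"
      using hune ne by (simp add: gext_less last_conv_nth)
    ultimately show ?thesis using eqn by simp
  qed
qed


lemma Rat_ne:
  assumes "w \<in> V" "lam w \<le> ereal r"
  shows "Rat w \<noteq> {}"
proof
  assume R: "Rat w = {}"
  have "ng w = \<infinity>" using R unfolding ng_def nego_def Rat_def by (simp add: top_ereal_def)
  moreover have "ng w \<le> lam w + ereal \<epsilon>" using fpu assms(1) by (simp add: ng_def)
  moreover have "lam w + ereal \<epsilon> \<le> ereal (r + \<epsilon>)" using assms(2) by (cases "lam w") auto
  ultimately show False by simp
qed

lemma inv_snoc:
  assumes H: "is_hist V E v0 (h @ [x])" and ne: "h \<noteq> []" and I: "INV h"
  shows "INV (h @ [x])"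
proof -
  have Hh: "is_hist V E v0 h" using is_hist_take[OF H, of "length h"] ne by simp
  have P: "lam (last h) \<le> ereal (mu (own (last h)) (\<lambda>n. gext F h (length h - 1 + n)))"
    by (rule plan[OF Hh I])
  have lastV: "last h \<in> V" using Hh ne by (auto simp: is_hist_def)
  have stx: "st (h @ [x]) = step (st h) h x" by (rule st_snoc[OF ne])
  have keepfacts: "INV (h @ [x])" if S1: "st (h @ [x]) = Some k" and S2: "st h = Some k"
    and C: "own (last h) \<noteq> own (h ! k) \<longrightarrow> x = S (h ! k) (own (last h)) (drop k h)" for k
  proof -
    have k: "Suc k < length h" "h ! k \<in> V" "Rat (h ! k) \<noteq> {}" "compatible own (S (h ! k)) (own (h ! k)) (drop k h)"
      using I S2 by (auto simp: INV_def)
    have "compatible own (S (h ! k)) (own (h ! k)) (drop k h @ [x])"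
      by (rule compatible_snoc[OF k(4)]) (use k(1) C in auto)
    thus ?thesis using S1 k by (simp add: INV_def nth_append)
  qed
  have restartfacts: "INV (h @ [x])" if S1: "st (h @ [x]) = Some (length h - 1)"
  proof -
    have r: "Rat (last h) \<noteq> {}" by (rule Rat_ne[OF lastV P])
    have eq1: "(h @ [x]) ! (length h - 1) = last h" using ne by (simp add: nth_append last_conv_nth)
    have eq2: "drop (length h - 1) (h @ [x]) = [last h, x]" using ne
      by (cases h rule: rev_cases) auto
    have eq1': "(h @ [x]) ! (length h - Suc 0) = last h" using eq1 by simp
    have eq2': "drop (length h - Suc 0) h = [last h]" using ne by (cases h rule: rev_cases) auto
    show ?thesis using S1 ne lastV r compatible_two[of own "S (last h)" "last h" x]
      by (simp add: INV_def eq1' eq2')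
  qed
  show ?thesis
  proof (cases "x = mv (st h) h")
    case True
    hence same: "st (h @ [x]) = st h" using stx by (simp add: step_def)
    show ?thesis
    proof (cases "st h")
      case None
      hence "\<forall>m<length h. h ! m = \<theta> m" using I by (simp add: INV_def)
      moreover have "x = \<theta> (length h)" using True None by (simp add: mv_def)
      ultimately show ?thesis using same None by (auto simp: INV_def nth_append less_Suc_eq)
    next
      case (Some k)
      have "own (last h) \<noteq> own (h ! k) \<longrightarrow> x = S (h ! k) (own (last h)) (drop k h)"
        using True Some by (simp add: mv_def pii_def)
      thus ?thesis using keepfacts same Some by simp
    qed
  next
    case False
    show ?thesis
    proof (cases "st h")
      case None
      thus ?thesis using stx False restartfacts by (simp add: step_def)
    next
      case (Some k)
      show ?thesis
      proof (cases "own (h ! k) = own (last h) \<and> ng (h ! k) \<le> ng (last h)")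
        case True
        hence "st (h @ [x]) = Some k" using stx False Some by (simp add: step_def)
        thus ?thesis using keepfacts Some True by simp
      next
        case F2: False
        hence "st (h @ [x]) = Some (length h - 1)" using stx False Some by (auto simp: step_def)
        thus ?thesis by (rule restartfacts)
      qed
    qed
  qed
qed

lemma INV_all: "is_hist V E v0 h \<Longrightarrow> INV h"
proof (induction h rule: rev_induct)
  case Nil thus ?case by (simp add: is_hist_def)
next
  case (snoc x h)
  show ?case
  proof (cases "h = []")
    case True
    hence "x = v0" using snoc.prems by (simp add: is_hist_def)
    thus ?thesis using True th0 by (simp add: INV_def)
  next
    case False
    have "is_hist V E v0 h" using is_hist_take[OF snoc.prems, of "length h"] False by simp
    thus ?thesis using inv_snoc[OF snoc.prems False] snoc.IH by simp
  qed
qed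

lemma F_valid:
  assumes H: "is_hist V E v0 h"
  shows "(last h, F h) \<in> E"
proof -
  have I: "INV h" by (rule INV_all[OF H])
  have ne: "h \<noteq> []" using H by (simp add: is_hist_def)
  show ?thesis
  proof (cases "st h")
    case None
    hence th: "\<forall>m<length h. h ! m = \<theta> m" using I by (simp add: INV_def)
    have "last h = \<theta> (length h - 1)" using th ne by (simp add: last_conv_nth)
    moreover have "F h = \<theta> (Suc (length h - 1))" using None ne by (simp add: F_def mv_def)
    ultimately show ?thesis using play by (simp add: is_play_def)
  next
    case (Some k)
    let ?w = "h ! k"
    have k: "Suc k < length h" "?w \<in> V" "Rat ?w \<noteq> {}"
      using I Some by (auto simp: INV_def)
    have hu: "is_hist V E ?w (drop k h)" using is_hist_drop[OF H] k(1) by simp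
    have ld: "last (drop k h) = last h" using k(1) by simp
    have "last h \<in> V" using H ne by (auto simp: is_hist_def)
    hence op: "own (last h) \<in> Pl" using G by (auto simp: game_def)
    have Fh: "F h = pii ?w (own (last h)) (drop k h)" using Some by (simp add: F_def mv_def)
    show ?thesis
    proof (cases "own (last h) = own ?w")
      case True
      have "is_strategy V E own (own ?w) ?w (T ?w)" using T_props[OF k(2,3)] by (simp add: ratT_def)
      thus ?thesis using hu ld True Fh unfolding is_strategy_def pii_def by auto
    next
      case False
      have "is_strategy V E own (own (last h)) ?w (S ?w (own (last h)))"
        by (rule S_strat[OF k(2,3) op False])
      thus ?thesis using hu ld False Fh unfolding is_strategy_def pii_def by auto
    qed
  qed
qed


lemma spe_ineq:
  assumes hv: "is_hist V E v0 hv" and i: "i \<in> Pl" and t: "is_strategy V E own i (last hv) \<tau>"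
  shows "mu i (outcome own ((subprof (\<lambda>j. F) hv)(i := \<tau>)) (last hv))
           \<le> mu i (outcome own (subprof (\<lambda>j. F) hv) (last hv)) + \<epsilon>"
proof -
  have ne: "hv \<noteq> []" using hv by (simp add: is_hist_def)
  define k0 where "k0 = length hv - 1"
  define Gp where "Gp = (\<lambda>h. if own (last h) = i then \<tau> (drop k0 h) else F h)"
  define \<rho> where "\<rho> = gext Gp hv"
  define \<rho>F where "\<rho>F = gext F hv"
  have LHS: "outcome own ((subprof (\<lambda>j. F) hv)(i := \<tau>)) (last hv) = (\<lambda>n. \<rho> (k0 + n))"
    unfolding \<rho>_def Gp_def k0_def by (rule outcome_subprof_upd[OF ne])
  have RHS: "outcome own (subprof (\<lambda>j. F) hv) (last hv) = (\<lambda>n. \<rho>F (k0 + n))"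
    unfolding \<rho>F_def k0_def by (rule outcome_subprof[OF ne])
  have EV: "E \<subseteq> V \<times> V" using G by (simp add: game_def)
  have lhv: "last hv = hv ! k0" using ne by (simp add: k0_def last_conv_nth)
  have valG: "\<forall>h. is_hist V E v0 h \<and> length hv \<le> length h \<and> take (length hv) h = hv \<longrightarrow> (last h, Gp h) \<in> E"
  proof (intro allI impI)
    fix h assume h: "is_hist V E v0 h \<and> length hv \<le> length h \<and> take (length hv) h = hv"
    show "(last h, Gp h) \<in> E"
    proof (cases "own (last h) = i")
      case True
      have k0l: "k0 < length h" using h ne unfolding k0_def by (cases hv) auto
      have "h ! k0 = hv ! k0" using h k0l ne by (metis k0_def diff_less length_greater_0_conv less_one nth_take)
      hence hd: "is_hist V E (last hv) (drop k0 h)" using is_hist_drop[of V E v0 h k0] h k0l lhv by simp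
      have "last (drop k0 h) = last h" using k0l by simp
      thus ?thesis using t hd True unfolding is_strategy_def Gp_def by auto
    next
      case False thus ?thesis using F_valid h by (simp add: Gp_def)
    qed
  qed
  have valF: "\<forall>h. is_hist V E v0 h \<and> length hv \<le> length h \<and> take (length hv) h = hv \<longrightarrow> (last h, F h) \<in> E"
    using F_valid by blast
  have Hr: "is_hist V E v0 (pre \<rho> m)" for m using gext_hist(1)[OF hv EV valG] by (simp add: \<rho>_def)
  have Pr: "is_play V E \<rho>" using gext_hist(2)[OF hv EV valG] by (simp add: \<rho>_def)
  have HrF: "is_hist V E v0 (pre \<rho>F m)" for m using gext_hist(1)[OF hv EV valF] by (simp add: \<rho>F_def)
  have PrF: "is_play V E \<rho>F" using gext_hist(2)[OF hv EV valF] by (simp add: \<rho>F_def)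
  have PIi: "\<And>x n. is_play V E x \<Longrightarrow> mu i (\<lambda>k. x (n + k)) = mu i x" using PI i
    unfolding prefix_independent_def by blast
  have rG: "\<rho> (Suc m) = Gp (pre \<rho> m)" if "k0 \<le> m" for m
    using that ne by (simp add: \<rho>_def gext_ge k0_def)
  have rF: "\<rho>F (Suc m) = F (pre \<rho>F m)" if "k0 \<le> m" for m
    using that ne by (simp add: \<rho>F_def gext_ge k0_def)
  show ?thesis
  proof (cases "\<forall>m\<ge>k0. \<rho> (Suc m) = F (pre \<rho> m)")
    case True
    have "\<rho> = \<rho>F" unfolding \<rho>F_def
      by (rule gext_char) (use ne True in \<open>auto simp: \<rho>_def gext_less k0_def\<close>)
    thus ?thesis using LHS RHS e by simp
  next
    case False
    define m1 where "m1 = (LEAST m. k0 \<le> m \<and> \<rho> (Suc m) \<noteq> F (pre \<rho> m))"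
    have ex: "\<exists>m. k0 \<le> m \<and> \<rho> (Suc m) \<noteq> F (pre \<rho> m)" using False by auto
    have m1: "k0 \<le> m1" "\<rho> (Suc m1) \<noteq> F (pre \<rho> m1)"
      using LeastI_ex[OF ex] by (auto simp: m1_def)
    have before: "\<rho> (Suc m) = F (pre \<rho> m)" if "k0 \<le> m" "m < m1" for m
      using not_less_Least[of m "\<lambda>m. k0 \<le> m \<and> \<rho> (Suc m) \<noteq> F (pre \<rho> m)"] that by (auto simp: m1_def)
    have agreeA: "\<forall>j'\<le>j. \<rho> j' = \<rho>F j'" if "j \<le> m1" for j
      using that
    proof (induction j)
      case 0 thus ?case using ne by (simp add: \<rho>_def \<rho>F_def gext_less)
    next
      case (Suc j)
      have IH: "\<forall>j'\<le>j. \<rho> j' = \<rho>F j'" using Suc by simp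
      have "\<rho> (Suc j) = \<rho>F (Suc j)"
      proof (cases "Suc j < length hv")
        case True thus ?thesis by (simp add: \<rho>_def \<rho>F_def gext_less)
      next
        case False
        hence j: "k0 \<le> j" by (simp add: k0_def)
        have jm: "j < m1" using Suc by simp
        have "pre \<rho> j = pre \<rho>F j" by (rule pre_cong) (use IH in auto)
        thus ?thesis using before[OF j jm] rF[OF j] by simp
      qed
      thus ?case using IH le_Suc_eq by auto
    qed
    have agree: "\<rho> j = \<rho>F j" if "j \<le> m1" for j using agreeA[of m1] that by simp
    have pre1: "pre \<rho> m1 = pre \<rho>F m1" by (rule pre_cong) (use agree in auto)
    have dev1: "Gp (pre \<rho> m1) \<noteq> F (pre \<rho> m1)" using m1 rG by simp
    have own1: "own (\<rho> m1) = i" using dev1 by (auto simp: Gp_def split: if_splits)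
    let ?w1 = "\<rho> m1"
    have w1V: "?w1 \<in> V" using Pr by (simp add: is_play_def)
    have st1: "st (pre \<rho> m1) = st hv"
      using st_gext_const[OF ne, of m1] m1(1) ne pre1 by (simp add: \<rho>F_def k0_def)
    have plan1: "lam ?w1 \<le> ereal (mu i (\<lambda>n. \<rho>F (k0 + n)))"
    proof -
      have "lam (last (pre \<rho>F m1)) \<le> ereal (mu (own (last (pre \<rho>F m1))) (\<lambda>n. gext F (pre \<rho>F m1) (length (pre \<rho>F m1) - 1 + n)))"
        by (rule plan[OF HrF INV_all[OF HrF]])
      moreover have "gext F (pre \<rho>F m1) = \<rho>F"
        unfolding \<rho>F_def by (rule gext_pre) (use ne m1 in \<open>auto simp: k0_def\<close>)
      ultimately have "lam (\<rho>F m1) \<le> ereal (mu i (\<lambda>n. \<rho>F (m1 + n)))"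
        using own1 agree[of m1] by simp
      thus ?thesis using agree[of m1] PIi[OF PrF, of m1] PIi[OF PrF, of k0] by simp
    qed
    have ngw1: "ng ?w1 \<le> lam ?w1 + ereal \<epsilon>" using fpu w1V by (simp add: ng_def)
    have stS: "st (pre \<rho> (Suc m)) = step (st (pre \<rho> m)) (pre \<rho> m) (\<rho> (Suc m))" for m
      using st_snoc[of "pre \<rho> m" "\<rho> (Suc m)"] by (simp add: pre_Suc)
    have devown: "own (\<rho> m) = i" if "k0 \<le> m" "\<rho> (Suc m) \<noteq> F (pre \<rho> m)" for m
      using rG[OF that(1)] that(2) by (auto simp: Gp_def split: if_splits)
    have kle: "k < m" if "st (pre \<rho> m) = Some k" for m k
      using INV_all[OF Hr, of m] that by (simp add: INV_def)
    have trans: "st (pre \<rho> (Suc m)) = Some k \<or> (st (pre \<rho> (Suc m)) = Some m \<and> own (\<rho> m) = i \<and> ng (\<rho> m) < ng (\<rho> k))"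
      if "k0 \<le> m" "st (pre \<rho> m) = Some k" "own (\<rho> k) = i" for m k
    proof (cases "\<rho> (Suc m) = F (pre \<rho> m)")
      case True
      hence "\<rho> (Suc m) = mv (st (pre \<rho> m)) (pre \<rho> m)" by (simp add: F_def)
      thus ?thesis using stS[of m] that(2) by (simp add: step_def)
    next
      case False
      have om: "own (\<rho> m) = i" by (rule devown[OF that(1) False])
      have km: "k < m" by (rule kle[OF that(2)])
      have "\<rho> (Suc m) \<noteq> mv (st (pre \<rho> m)) (pre \<rho> m)" using False by (simp add: F_def)
      hence "st (pre \<rho> (Suc m)) = (if own (\<rho> k) = own (\<rho> m) \<and> ng (\<rho> k) \<le> ng (\<rho> m) then Some k else Some m)"
        using stS[of m] that(2) km by (simp add: step_def)
      thus ?thesis using om that(3) by (auto split: if_splits)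
    qed
    have base: "\<exists>k. st (pre \<rho> (Suc m1)) = Some k \<and> own (\<rho> k) = i \<and> ng (\<rho> k) \<le> ng ?w1"
    proof -
      have dv: "\<rho> (Suc m1) \<noteq> mv (st (pre \<rho> m1)) (pre \<rho> m1)" using m1(2) by (simp add: F_def)
      show ?thesis
      proof (cases "st (pre \<rho> m1)")
        case None
        hence "st (pre \<rho> (Suc m1)) = Some m1" using stS[of m1] dv by (simp add: step_def)
        thus ?thesis using own1 by auto
      next
        case (Some k)
        have km: "k < m1" by (rule kle[OF Some])
        have "st (pre \<rho> (Suc m1)) = (if own (\<rho> k) = own (\<rho> m1) \<and> ng (\<rho> k) \<le> ng (\<rho> m1) then Some k else Some m1)"
          using stS[of m1] dv Some km by (simp add: step_def)
        thus ?thesis using own1 by (auto split: if_splits)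
      qed
    qed
    have Qall: "\<exists>k. st (pre \<rho> m) = Some k \<and> own (\<rho> k) = i \<and> ng (\<rho> k) \<le> ng ?w1" if "Suc m1 \<le> m" for m
      using that
    proof (induction rule: dec_induct)
      case base thus ?case by (rule \<open>\<exists>k. st (pre \<rho> (Suc m1)) = Some k \<and> own (\<rho> k) = i \<and> ng (\<rho> k) \<le> ng ?w1\<close>)
    next
      case (step n)
      then obtain k where k: "st (pre \<rho> n) = Some k" "own (\<rho> k) = i" "ng (\<rho> k) \<le> ng ?w1" by blast
      have "k0 \<le> n" using step m1 by simp
      from trans[OF this k(1,2)] show ?case using k by (auto intro: order_trans less_imp_le)
    qed
    define b where "b m = the (st (pre \<rho> m))" for m
    define c where "c m = ng (\<rho> (b m))" for m
    have bS: "st (pre \<rho> m) = Some (b m) \<and> own (\<rho> (b m)) = i \<and> c m \<le> ng ?w1" if "Suc m1 \<le> m" for m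
      using Qall[OF that] by (auto simp: b_def c_def)
    have cstep: "c (Suc m) \<le> c m \<and> (b (Suc m) \<noteq> b m \<longrightarrow> c (Suc m) < c m)" if "Suc m1 \<le> m" for m
    proof -
      have k0m: "k0 \<le> m" using that m1 by simp
      have b1: "st (pre \<rho> m) = Some (b m)" "own (\<rho> (b m)) = i" using bS[OF that] by auto
      from trans[OF k0m b1] show ?thesis
      proof
        assume "st (pre \<rho> (Suc m)) = Some (b m)"
        hence "b (Suc m) = b m" by (simp add: b_def)
        thus ?thesis by (simp add: c_def)
      next
        assume a: "st (pre \<rho> (Suc m)) = Some m \<and> own (\<rho> m) = i \<and> ng (\<rho> m) < ng (\<rho> (b m))"
        hence "b (Suc m) = m" by (simp add: b_def)
        thus ?thesis using a by (simp add: c_def less_imp_le)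
      qed
    qed
    have cmono: "\<forall>m\<ge>Suc m1. c (Suc m) \<le> c m" using cstep by blast
    have fin_c: "finite (c ` {Suc m1..})"
    proof (rule finite_subset[OF _ finite_imageI[OF fin, of ng]])
      show "c ` {Suc m1..} \<subseteq> ng ` V" using Pr by (auto simp: c_def is_play_def)
    qed
    obtain M where M: "M \<ge> Suc m1" "\<forall>m\<ge>M. c m = c M"
      using antitone_finite_const[OF cmono fin_c] by blast
    have bconst: "b m = b M" if "M \<le> m" for m
      using that
    proof (induction rule: dec_induct)
      case base thus ?case by simp
    next
      case (step n)
      have e1: "c (Suc n) = c M" using M(2)[rule_format, of "Suc n"] step(1) by linarith
      have e2: "c n = c M" using M(2)[rule_format, of n] step(1) by linarith
      have sm: "Suc m1 \<le> n" using M(1) step(1) by linarith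
      have "b (Suc n) = b n" using cstep[OF sm] e1 e2 by auto
      thus ?case using step by simp
    qed
    define K where "K = b M"
    define w where "w = \<rho> K"
    have stK: "st (pre \<rho> m) = Some K" if "M \<le> m" for m
    proof -
      have "Suc m1 \<le> m" using that M(1) by linarith
      thus ?thesis using bS[of m] bconst[OF that] by (simp add: K_def)
    qed
    have KM: "K < M" using kle[OF stK[of M]] by simp
    have IM: "INV (pre \<rho> M)" by (rule INV_all[OF Hr])
    have wV: "w \<in> V" and Rw: "Rat w \<noteq> {}"
      using IM stK[of M] KM by (auto simp: INV_def w_def)
    have ow: "own w = i" using bS[OF M(1)] by (simp add: w_def K_def)
    have cM: "c M = ng w" by (simp add: c_def w_def K_def)
    have compat: "compatible own (S w) i (drop K (pre \<rho> m))" if "M \<le> m" for m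
    proof -
      have "INV (pre \<rho> m)" by (rule INV_all[OF Hr])
      moreover have "pre \<rho> m ! K = w" using KM that by (simp add: w_def)
      ultimately show ?thesis using stK[OF that] ow by (simp add: INV_def)
    qed
    define x where "x = (\<lambda>j. \<rho> (K + j))"
    have prex: "drop K (pre \<rho> (K + n)) = pre x n" for n unfolding x_def by (rule pre_drop)
    have xcomp: "x (Suc n) = S w (own (x n)) (pre x n)" if "own (x n) \<noteq> i" for n
    proof -
      define m where "m = max M (K + n + 1)"
      have mM: "M \<le> m" by (simp add: m_def)
      have mK: "m = K + (m - K)" using KM mM by simp
      have C: "compatible own (S w) i (pre x (m - K))"
        using compat[OF mM] prex[of "m - K"] mK by simp
      have nn: "Suc n < length (pre x (m - K))" by (simp add: m_def)
      have "pre x (m - K) ! Suc n = S w (own (pre x (m - K) ! n)) (take (Suc n) (pre x (m - K)))"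
        using C nn that unfolding compatible_def by (simp add: m_def)
      moreover have "take (Suc n) (pre x (m - K)) = pre x n" by (rule pre_take) (simp add: m_def)
      ultimately show ?thesis using nn by (simp add: m_def)
    qed
    define \<tau>' where "\<tau>' = (\<lambda>g. if g = pre x (length g - 1) then x (length g) else T w g)"
    have xout: "outcome own ((S w)(i := \<tau>')) w = x"
      unfolding outcome_eq
    proof (rule sym, rule gext_char)
      show "[w] \<noteq> []" by simp
      show "\<forall>m<length [w]. x m = [w] ! m" by (simp add: x_def w_def)
      show "\<forall>m. length [w] \<le> Suc m \<longrightarrow> x (Suc m) = ((S w)(i := \<tau>')) (own (last (pre x m))) (pre x m)"
      proof (intro allI impI)
        fix m
        show "x (Suc m) = ((S w)(i := \<tau>')) (own (last (pre x m))) (pre x m)"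
        proof (cases "own (x m) = i")
          case True thus ?thesis by (simp add: \<tau>'_def)
        next
          case False thus ?thesis using xcomp[OF False] by simp
        qed
      qed
    qed
    have Tw: "ratT w (T w)" by (rule T_props[OF wV Rw])
    have t': "is_strategy V E own i w \<tau>'"
      unfolding is_strategy_def
    proof (intro allI impI)
      fix g assume g: "is_hist V E w g \<and> own (last g) = i"
      show "(last g, \<tau>' g) \<in> E"
      proof (cases "g = pre x (length g - 1)")
        case True
        have "length g = Suc (length g - 1)" using g by (cases g) (auto simp: is_hist_def)
        hence "\<tau>' g = x (Suc (length g - 1))" using True by (simp add: \<tau>'_def)
        moreover have "last g = x (length g - 1)" using True by (metis pre_last)
        ultimately show ?thesis using Pr by (simp add: is_play_def x_def)
      next
        case False
        have "is_strategy V E own (own w) w (T w)" using Tw by (simp add: ratT_def)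
        thus ?thesis using False g ow by (simp add: \<tau>'_def is_strategy_def)
      qed
    qed
    have "ereal (mu i x) \<le> nego_val Pl V E own mu w (S w)"
      unfolding nego_val_def ow
    proof -
      have "ereal (mu i (outcome own ((S w)(i := \<tau>')) w)) \<le> (SUP \<tau>\<in>{\<tau>. is_strategy V E own i w \<tau>}. ereal (mu i (outcome own ((S w)(i := \<tau>)) w)))"
        by (rule SUP_upper) (use t' in simp)
      thus "ereal (mu i x) \<le> (SUP \<tau>\<in>{\<tau>. is_strategy V E own i w \<tau>}. ereal (mu i (outcome own ((S w)(i := \<tau>)) w)))"
        using xout by simp
    qed
    also have "\<dots> = ng w" by (rule S_props(2)[OF wV Rw])
    also have "\<dots> = c M" by (simp add: cM)
    also have "\<dots> \<le> c (Suc m1)" by (rule antitone_chain[OF cmono order_refl M(1)])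
    also have "\<dots> \<le> ng ?w1" using bS[of "Suc m1"] by simp
    also have "\<dots> \<le> lam ?w1 + ereal \<epsilon>" by (rule ngw1)
    also have "\<dots> \<le> ereal (mu i (\<lambda>n. \<rho>F (k0 + n))) + ereal \<epsilon>" using plan1 by (rule add_right_mono)
    finally have fin1: "mu i x \<le> mu i (\<lambda>n. \<rho>F (k0 + n)) + \<epsilon>" by simp
    have "mu i x = mu i \<rho>" unfolding x_def by (rule PIi[OF Pr])
    moreover have "mu i (\<lambda>n. \<rho> (k0 + n)) = mu i \<rho>" by (rule PIi[OF Pr])
    ultimately show ?thesis using fin1 LHS RHS by simp
  qed
qed


lemma dir2: "\<exists>\<sigma>. eps_SPE Pl V E own mu \<epsilon> v0 \<sigma> \<and> outcome own \<sigma> v0 = \<theta>"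
proof (intro exI conjI)
  show "eps_SPE Pl V E own mu \<epsilon> v0 (\<lambda>j. F)"
    unfolding eps_SPE_def
  proof (intro conjI allI impI ballI)
    show "is_profile Pl V E own v0 (\<lambda>j. F)"
      unfolding is_profile_def is_strategy_def using F_valid by blast
  next
    fix hv i \<tau> assume "is_hist V E v0 hv" "i \<in> Pl" "is_strategy V E own i (last hv) \<tau>"
    thus "mu i (outcome own ((subprof (\<lambda>j. F) hv)(i := \<tau>)) (last hv))
           \<le> mu i (outcome own (subprof (\<lambda>j. F) hv) (last hv)) + \<epsilon>"
      by (rule spe_ineq)
  qed
  have "outcome own (\<lambda>j. F) v0 = gext F [v0]" by (simp add: outcome_eq)
  also have "\<dots> = \<theta>" by (rule gext_theta) (use th0 in auto)
  finally show "outcome own (\<lambda>j. F) v0 = \<theta>" .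
qed

end

theorem mainTheorem4:
  fixes Pl :: "'p set" and V :: "'v set" and E :: "('v \<times> 'v) set" and own :: "'v \<Rightarrow> 'p"
    and mu :: "'p \<Rightarrow> (nat \<Rightarrow> 'v) \<Rightarrow> real" and \<epsilon> :: real and v0 :: 'v
    and lam :: "'v \<Rightarrow> ereal" and \<theta> :: "nat \<Rightarrow> 'v"
  assumes "game Pl V E own" and "finite V"
    and "prefix_independent Pl V E mu"
    and "v0 \<in> V" and "\<epsilon> \<ge> 0"
    and "least_eps_fixed_point Pl V E own mu \<epsilon> lam"
    and "is_play V E \<theta>" and "\<theta> 0 = v0"
  shows "((\<exists>\<sigma>. eps_SPE Pl V E own mu \<epsilon> v0 \<sigma> \<and> outcome own \<sigma> v0 = \<theta>) \<longrightarrow> consistent own mu lam \<theta>)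
    \<and> (steady_negotiation Pl V E own mu \<longrightarrow> consistent own mu lam \<theta> \<longrightarrow>
         (\<exists>\<sigma>. eps_SPE Pl V E own mu \<epsilon> v0 \<sigma> \<and> outcome own \<sigma> v0 = \<theta>))"
proof (intro conjI impI)
  assume "\<exists>\<sigma>. eps_SPE Pl V E own mu \<epsilon> v0 \<sigma> \<and> outcome own \<sigma> v0 = \<theta>"
  then obtain \<sigma> where s: "eps_SPE Pl V E own mu \<epsilon> v0 \<sigma>" "outcome own \<sigma> v0 = \<theta>" by blast
  show "consistent own mu lam \<theta>" using dir1[OF assms(1,5,6) s(1) assms(4)] s(2) by simp
next
  assume st: "steady_negotiation Pl V E own mu" and c: "consistent own mu lam \<theta>"
  have fpu: "\<forall>v\<in>V. nego Pl V E own mu lam v \<le> lam v + ereal \<epsilon>"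
    using assms(6) by (simp add: least_eps_fixed_point_def eps_fixed_point_def)
  interpret D2 Pl V E own mu \<epsilon> lam \<theta> v0
    by unfold_locales (use assms st c fpu in auto)
  show "\<exists>\<sigma>. eps_SPE Pl V E own mu \<epsilon> v0 \<sigma> \<and> outcome own \<sigma> v0 = \<theta>" by (rule dir2)
qed

end
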